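(* Let $n\ge2$, $1<p<\infty$, $R>0$, $\bar\beta>0$ a constant, and let $f$ be as in the context. Then there exists a positive constant $C=C(R)$ such that $f(r)\le C(R)\,r$ for all $0\le r\le R$.
   Context: $F:\mathbb R^n\to[0,\infty)$ is convex, even, positively 1-homogeneous, with $a|\xi|\le F(\xi)\le b|\xi|$ ($0<a\le b$), $F\in C^2(\mathbb R^n\setminus\{0\})$, Hessian of $F^p$ positive definite off the origin; $F^o(v)=\sup_{\xi\ne0}\langle\xi,v\rangle/F(\xi)$ and $\mathcal W_R=\{x:F^o(x)<R\}$. $\ell_1(\bar\beta,\mathcal W_R)=\inf_{v\in W^{1,p}(\mathcal W_R),v\not\equiv0}\frac{\int_{\mathcal W_R}F^p(\nabla v)dx+\bar\beta\int_{\partial\mathcal W_R}|v|^pF(\nu)d\mathcal H^{n-1}}{\int_{\mathcal W_R}|v|^pdx}$ ($\nu$ the Euclidean outer normal). It is known that the positive first eigenfunction on $\mathcal W_R$ has the form $v(x)=\rho(F^o(x))$, where $\rho\in C^\infty(]0,R[)\cap C^1([0,R])$ is positive, decreasing, and solves $-(p-1)(-\rho'(r))^{p-2}\rho''(r)+\frac{n-1}{r}(-\rho'(r))^{p-1}=\ell_1(\bar\beta,\mathcal W_R)\rho(r)^{p-1}$ for $r\in]0,R[$, $\rho'(0)=0$, $-(-\rho'(R))^{p-1}+\bar\beta\rho(R)^{p-1}=0$. Define $f(r)=\dfrac{(-\rho'(r))^{p-1}}{\rho(r)^{p-1}}$ for $r\in[0,R]$. *)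

theory Defs
  imports "HOL-Analysis.Analysis"
begin

definition smooth_on :: "(real \<Rightarrow> real) \<Rightarrow> real set \<Rightarrow> bool" where
  "smooth_on g S \<longleftrightarrow>
     (\<exists>D :: nat \<Rightarrow> real \<Rightarrow> real. D 0 = g \<and>
        (\<forall>k. \<forall>x\<in>S. (D k has_real_derivative D (Suc k) x) (at x)))"

end

theory Submission
  imports Defs
begin

theorem theorem4p6:
  fixes n :: nat and p R \<beta> lam :: real and \<rho> \<rho>' :: "real \<Rightarrow> real"
  assumes n2: "n \<ge> 2"
    and p1: "1 < p"
    and R0: "R > 0"
    and beta0: "\<beta> > 0"
    and C1_deriv: "\<forall>r\<in>{0..R}. (\<rho> has_real_derivative \<rho>' r) (at r within {0..R})"
    and C1_cont: "continuous_on {0..R} \<rho>'"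
    and smooth: "smooth_on \<rho> {0<..<R}"
    and pos: "\<forall>r\<in>{0..R}. \<rho> r > 0"
    and decr: "\<forall>r s. 0 \<le> r \<longrightarrow> r \<le> s \<longrightarrow> s \<le> R \<longrightarrow> \<rho> s \<le> \<rho> r"
    and ode: "\<forall>r\<in>{0<..<R}.
               - (p - 1) * (- \<rho>' r) powr (p - 2) * deriv \<rho>' r
               + (real n - 1) / r * (- \<rho>' r) powr (p - 1)
               = lam * (\<rho> r) powr (p - 1)"
    and bc0: "\<rho>' 0 = 0"
    and bcR: "- ((- \<rho>' R) powr (p - 1)) + \<beta> * (\<rho> R) powr (p - 1) = 0"
  shows "\<exists>C>0. \<forall>r\<in>{0..R}. (- \<rho>' r) powr (p - 1) / (\<rho> r) powr (p - 1) \<le> C * r"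
proof -
  define a where "a = p - 1"
  have a0: "a > 0" using p1 a_def by simp
  obtain D :: "nat \<Rightarrow> real \<Rightarrow> real" where D0: "D 0 = \<rho>"
    and DD: "\<And>k x. x \<in> {0<..<R} \<Longrightarrow> (D k has_real_derivative D (Suc k) x) (at x)"
    using smooth unfolding smooth_on_def by blast
  have rho'D: "\<rho>' x = D 1 x" if x: "x \<in> {0<..<R}" for x
  proof -
    have "(\<rho> has_real_derivative \<rho>' x) (at x within {0..R})" using C1_deriv x by auto
    then have "(\<rho> has_real_derivative \<rho>' x) (at x)"
      using at_within_interior[of x "{0..R}"] x by simp
    moreover have "(\<rho> has_real_derivative D 1 x) (at x)" using DD[OF x, of 0] D0 by simp
    ultimately show ?thesis using DERIV_unique by blast
  qed
  have rho'der: "(\<rho>' has_real_derivative D 2 x) (at x)" if x: "x \<in> {0<..<R}" for x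
  proof -
    have "(D 1 has_real_derivative D 2 x) (at x)" using DD[OF x, of 1] by (simp add: numeral_2_eq_2)
    then show ?thesis
      by (rule has_field_derivative_transform_within_open[of _ _ _ "{0<..<R}"]) (use x rho'D in auto)
  qed
  have derivrho': "deriv \<rho>' x = D 2 x" if x: "x \<in> {0<..<R}" for x
    using rho'der[OF x] by (rule DERIV_imp_deriv)
  have rhoat: "(\<rho> has_real_derivative \<rho>' x) (at x)" if x: "x \<in> {0<..<R}" for x
  proof -
    have "(\<rho> has_real_derivative \<rho>' x) (at x within {0..R})" using C1_deriv x by auto
    then show ?thesis using at_within_interior[of x "{0..R}"] x by simp
  qed
  have nonpos_int: "\<rho>' x \<le> 0" if x: "x \<in> {0<..<R}" for x
  proof (rule ccontr)
    assume "\<not> \<rho>' x \<le> 0"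
    then obtain d where d: "d > 0" "\<forall>h>0. h < d \<longrightarrow> \<rho> x < \<rho> (x + h)"
      using DERIV_pos_inc_right[OF rhoat[OF x]] by auto
    define h where "h = min (d/2) ((R - x)/2)"
    have "h > 0" using d x unfolding h_def by simp
    moreover have "h < d" using d unfolding h_def by linarith
    moreover have "h \<le> (R - x)/2" unfolding h_def by linarith
    then have "x + h \<le> R" using x by simp
    ultimately have "h > 0" "h < d" "x + h \<le> R" by auto
    then have "\<rho> x < \<rho> (x + h)" using d by auto
    moreover have "\<rho> (x + h) \<le> \<rho> x" using decr x \<open>h > 0\<close> \<open>x + h \<le> R\<close> by auto
    ultimately show False by simp
  qed
  have nonpos: "-\<rho>' x \<ge> 0" if x: "x \<in> {0..R}" for x
  proof -
    have cl: "closure {0<..<R} = {0..R}" using R0 by simp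
    have "continuous_on (closure {0<..<R}) (\<lambda>x. - \<rho>' x)"
      unfolding cl by (intro continuous_intros C1_cont)
    from continuous_ge_on_closure[OF this, of x 0] show ?thesis using x cl nonpos_int by auto
  qed
  define g where "g t = (- \<rho>' t) powr a" for t
  define M where "M = max lam 0 * (\<rho> 0) powr a"
  obtain m where m: "n = Suc (Suc m)" using n2 by (metis add_2_eq_Suc le_Suc_ex)
  define h where "h t = t ^ Suc m * g t - M * t ^ n / real n" for t
  have gcont: "continuous_on {0..R} g"
    unfolding g_def by (intro continuous_on_powr' continuous_intros C1_cont) (use a0 nonpos in auto)
  have hcont: "continuous_on {0..R} h"
    unfolding h_def by (intro continuous_intros gcont) (use n2 in auto)
  have rhomono: "\<rho> t powr a \<le> \<rho> 0 powr a" if "t \<in> {0..R}" for t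
  proof -
    have "0 \<le> \<rho> t" using pos that by (simp add: less_imp_le)
    moreover have "\<rho> t \<le> \<rho> 0" using decr that by auto
    ultimately show ?thesis using a0 by (intro powr_mono2) auto
  qed
  have hder: "\<exists>y. (h has_real_derivative y) (at t) \<and> y \<le> 0"
    if t: "t \<in> {0<..<R}" and gp: "g t > 0" for t
  proof -
    have rp: "- \<rho>' t > 0" using gp nonpos[of t] t unfolding g_def by (cases "\<rho>' t = 0") auto
    have gd: "(g has_real_derivative a * (- \<rho>' t) powr (a - 1) * (- D 2 t)) (at t)"
      unfolding g_def
      using DERIV_fun_powr[OF DERIV_minus[OF rho'der[OF t]] rp, of a] by simp
    have odet: "- (p - 1) * (- \<rho>' t) powr (p - 2) * D 2 t + (real n - 1) / t * g t = lam * (\<rho> t) powr a"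
    proof -
      have "- (p - 1) * (- \<rho>' t) powr (p - 2) * deriv \<rho>' t + (real n - 1) / t * (- \<rho>' t) powr (p - 1) = lam * (\<rho> t) powr (p - 1)"
        using ode t by blast
      then show ?thesis unfolding derivrho'[OF t] g_def a_def .
    qed
    have am: "a - 1 = p - 2" using a_def by simp
    have gval: "a * (- \<rho>' t) powr (a - 1) * (- D 2 t) = lam * (\<rho> t) powr a - (real n - 1) / t * g t"
      using odet unfolding am a_def by (simp add: algebra_simps)
    have t0: "t > 0" using t by simp
    have "(h has_real_derivative
        (real (Suc m) * t ^ m * g t + t ^ Suc m * (lam * (\<rho> t) powr a - (real n - 1) / t * g t))
          - M * (real n * t ^ (n - 1)) / real n) (at t)"
    proof -
      define G where "G = lam * (\<rho> t) powr a - (real n - 1) / t * g t"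
      have gd2: "(g has_real_derivative G) (at t)" using gd gval G_def by simp
      have p1: "((\<lambda>x. x ^ Suc m) has_real_derivative real (Suc m) * t ^ m) (at t)"
        using DERIV_pow[of "Suc m" t] by simp
      have p2: "((\<lambda>x. x ^ Suc m * g x) has_real_derivative
          (real (Suc m) * t ^ m * g t + t ^ Suc m * G)) (at t)"
        using DERIV_mult[OF p1 gd2] by (simp add: algebra_simps)
      have p3: "((\<lambda>x. M * x ^ n / real n) has_real_derivative M * (real n * t ^ (n - 1)) / real n) (at t)"
        by (intro derivative_eq_intros) (use n2 in auto)
      show ?thesis unfolding h_def G_def[symmetric] using DERIV_diff[OF p2 p3] by simp
    qed
    moreover have "(real (Suc m) * t ^ m * g t + t ^ Suc m * (lam * (\<rho> t) powr a - (real n - 1) / t * g t))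
          - M * (real n * t ^ (n - 1)) / real n = t ^ Suc m * (lam * (\<rho> t) powr a - M)"
      using t0 m by (simp add: field_simps)
    moreover have "lam * (\<rho> t) powr a \<le> M"
    proof -
      have "lam * (\<rho> t) powr a \<le> max lam 0 * (\<rho> t) powr a" by (intro mult_right_mono) auto
      also have "\<dots> \<le> M" unfolding M_def using rhomono[of t] t by (intro mult_left_mono) auto
      finally show ?thesis .
    qed
    moreover have "t ^ Suc m \<ge> 0" using t0 by simp
    ultimately show ?thesis by (metis mult_nonneg_nonpos diff_le_0_iff_le)
  qed
  have h00: "h 0 = 0" unfolding h_def using m by simp
  have hle: "h r \<le> 0" if r: "r \<in> {0..R}" for r
  proof (rule ccontr)
    assume hr: "\<not> h r \<le> 0"
    define S where "S = {x \<in> {0..r}. h x \<le> 0}"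
    have hcr: "continuous_on {0..r} h" using hcont r by (auto intro: continuous_on_subset)
    have Sc: "closed S" unfolding S_def
      by (rule continuous_on_closed_Collect_le[OF hcr]) auto
    have "0 \<in> S" using h00 r by (auto simp: S_def)
    moreover have "bdd_above S" unfolding S_def by (auto intro: bdd_aboveI[of _ r])
    ultimately have sS: "Sup S \<in> S" using Sc closed_contains_Sup by blast
    define s where "s = Sup S"
    have sr: "s \<le> r" "0 \<le> s" "h s \<le> 0" using sS unfolding s_def S_def by auto
    have sr': "s < r" using sr hr by (cases "s = r") auto
    have above: "h x > 0" if "s < x" "x \<le> r" for x
    proof (rule ccontr)
      assume "\<not> h x > 0"
      then have "x \<in> S" using that sr by (auto simp: S_def)
      then have "x \<le> s" unfolding s_def using \<open>bdd_above S\<close> by (rule cSup_upper)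
      then show False using that by simp
    qed
    have "h r \<le> h s"
    proof (rule DERIV_nonpos_imp_decreasing_open[OF less_imp_le[OF sr']])
      fix x assume x: "s < x" "x < r"
      then have xi: "x \<in> {0<..<R}" using sr r by auto
      have "h x > 0" using above x by simp
      moreover have "g x \<ge> 0" unfolding g_def by simp
      moreover have "M * x ^ n / real n \<ge> 0" using x sr unfolding M_def by simp
      ultimately have "g x > 0" unfolding h_def
        by (cases "g x = 0") auto
      then show "\<exists>y. (h has_real_derivative y) (at x) \<and> y \<le> 0" using hder xi by blast
    next
      show "continuous_on {s..r} h" using hcont r sr by (auto intro: continuous_on_subset)
    qed
    then show False using hr sr by simp
  qed
  define C where "C = M / (real n * \<rho> R powr a) + 1"
  have "\<rho> R > 0" using pos R0 by auto
  then have rRpos: "\<rho> R powr a > 0" by simp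
  have M0: "M \<ge> 0" unfolding M_def by simp
  have "M / (real n * \<rho> R powr a) \<ge> 0" using M0 rRpos by simp
  then have Cpos: "C > 0" unfolding C_def by linarith
  show ?thesis
  proof (intro exI[of _ C] conjI Cpos ballI)
    fix r assume r: "r \<in> {0..R}"
    have fr: "(- \<rho>' r) powr (p - 1) / (\<rho> r) powr (p - 1) = g r / \<rho> r powr a"
      unfolding g_def a_def by simp
    show "(- \<rho>' r) powr (p - 1) / (\<rho> r) powr (p - 1) \<le> C * r"
    proof (cases "r = 0")
      case True
      then show ?thesis unfolding fr g_def using bc0 by simp
    next
      case False
      then have r0: "r > 0" using r by simp
      have "r ^ Suc m * g r \<le> M * r ^ n / real n" using hle[OF r] unfolding h_def by simp
      then have "r ^ Suc m * g r \<le> r ^ Suc m * (M * r / real n)" using m by (simp add: field_simps)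
      moreover have "r ^ Suc m > 0" using r0 by simp
      ultimately have gr: "g r \<le> M * r / real n" by (meson mult_le_cancel_left_pos)
      have rr: "\<rho> R powr a \<le> \<rho> r powr a" using pos decr r a0 R0 by (intro powr_mono2) (auto simp: less_imp_le)
      have g0: "g r \<ge> 0" unfolding g_def by simp
      have "g r / \<rho> r powr a \<le> g r / \<rho> R powr a"
      proof -
        have "\<rho> r powr a > 0" using rr rRpos by linarith
        then have "0 < \<rho> r powr a * \<rho> R powr a" using rRpos by simp
        then show ?thesis using rr g0 by (intro divide_left_mono) auto
      qed
      also have "\<dots> \<le> (M * r / real n) / \<rho> R powr a"
        using gr rRpos by (intro divide_right_mono) auto
      also have "\<dots> = (M / (real n * \<rho> R powr a)) * r" by simp
      also have "\<dots> \<le> C * r" unfolding C_def using r0 by (simp add: distrib_right)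
      finally show ?thesis unfolding fr .
    qed
  qed
qed

end
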